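(* Let $d\geq 10$. There exists no smooth function $g:[0,\infty)\to\mathbb{R}$ solving $$g''(y)+\left(\frac{d-3}{y}-\frac{y}{2}\right)g'(y)-\frac{d-2}{y^2}\,g(y)\,(g(y)-1)\,(g(y)-2)=0\quad\text{for all } y>0$$ and satisfying both of the following conditions: (i) $g(0)=g'(0)=0$ and $g''(0)=a$ for some $a>0$; (ii) $\lim_{y\to\infty}g(y)=b$ for some $b\in\mathbb{R}$, and $\lim_{y\to\infty}y^3g'(y)=-2(d-2)\,b(b-1)(b-2)$.
   Context: The equation is the ordinary differential equation for self-similar shrinking solutions $w(t,r)=g(r/\sqrt{-t})$, $t<0$, of the spherically symmetric Yang–Mills heat flow $w_t=w_{rr}+\frac{d-3}{r}w_r-\frac{d-2}{r^2}w(w-1)(w-2)$ in $d$ dimensions. Here "smooth" means $g\in C^\infty([0,\infty))$. *)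

theory Defs
  imports "HOL-Analysis.Analysis"
begin

definition smooth_derivs_on_nonneg :: "(real \<Rightarrow> real) \<Rightarrow> (nat \<Rightarrow> real \<Rightarrow> real) \<Rightarrow> bool" where
  "smooth_derivs_on_nonneg g Dg \<longleftrightarrow>
     Dg 0 = g \<and>
     (\<forall>n. \<forall>x\<ge>0. (Dg n has_real_derivative Dg (Suc n) x) (at x within {0..}))"

end

theory Submission
  imports Defs
begin



lemma exp_growth: "filterlim (\<lambda>y::real. exp (y^2/4) / y^k) at_top at_top"
proof -
  have "filterlim (\<lambda>y::real. inverse (y^k / exp y)) at_top at_top"
    by (rule filterlim_inverse_at_top[OF tendsto_power_div_exp_0])
       (auto simp: eventually_at_top_linorder intro!: exI[of _ 1])
  then have 1: "filterlim (\<lambda>y::real. exp y / y^k) at_top at_top"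
    by simp
  show ?thesis
  proof (rule filterlim_at_top_mono[OF 1])
    show "\<forall>\<^sub>F x in at_top. exp x / x ^ k \<le> exp (x\<^sup>2 / 4) / (x::real) ^ k"
      using eventually_ge_at_top[of "4::real"]
    proof eventually_elim
      case (elim x)
      have "x \<le> x^2/4" using elim by (simp add: power2_eq_square field_simps)
      then have "exp x \<le> exp (x^2/4)" by simp
      then show ?case using elim by (intro divide_right_mono) auto
    qed
  qed
qed

lemma growth_contra:
  fixes h :: "real \<Rightarrow> real"
  assumes lim: "((\<lambda>y. y^3 * h y) \<longlongrightarrow> L) at_top" and c: "c > 0"
    and bound: "\<forall>y\<ge>Y. c * (exp (y^2/4) / y^k) \<le> y^3 * h y"
  shows False
proof -
  have "filterlim (\<lambda>y. c * (exp (y^2/4) / y^k)) at_top at_top"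
    by (rule filterlim_tendsto_pos_mult_at_top[OF tendsto_const c exp_growth])
  then have ev1: "eventually (\<lambda>y. L + 1 < c * (exp (y^2/4) / y^k)) at_top"
    by (simp add: filterlim_at_top_dense)
  have ev2: "eventually (\<lambda>y. y^3 * h y < L + 1) at_top"
    using order_tendstoD(2)[OF lim] by simp
  have ev3: "eventually (\<lambda>y. y \<ge> Y) at_top" by (rule eventually_ge_at_top)
  have "eventually (\<lambda>y. L + 1 < c * (exp (y^2/4) / y^k) \<and> y^3 * h y < L + 1 \<and> y \<ge> Y) at_top"
    by (intro eventually_conj ev1 ev2 ev3)
  then obtain N where N: "\<And>y. y \<ge> N \<Longrightarrow> L + 1 < c * (exp (y^2/4) / y^k) \<and> y^3 * h y < L + 1 \<and> y \<ge> Y"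
    by (auto simp: eventually_at_top_linorder)
  from N[of N] bound show False by force
qed

lemma lower_bound_transfer:
  fixes y c z :: real and m :: nat
  assumes y: "y > 0" and h: "c \<le> y^(m+7) * exp (-(y^2/4)) * z"
  shows "c * (exp (y^2/4) / y^(m+4)) \<le> y^3 * z"
proof -
  have p: "y^(m+7) = y^3 * y^(m+4)" by (simp add: power_add eval_nat_numeral mult_ac)
  have ex: "exp (-(y^2/4)) * exp (y^2/4) = 1" by (simp add: exp_minus)
  have pos: "exp (y^2/4) / y^(m+4) > 0" using y by simp
  have "c * (exp (y^2/4) / y^(m+4)) \<le> (y^(m+7) * exp (-(y^2/4)) * z) * (exp (y^2/4) / y^(m+4))"
    by (rule mult_right_mono[OF h]) (use pos in simp)
  also have "\<dots> = y^3 * z * (exp (-(y^2/4)) * exp (y^2/4)) * (y^(m+4) / y^(m+4))"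
    by (simp add: p)
  also have "\<dots> = y^3 * z" using y by (simp add: ex)
  finally show ?thesis .
qed

lemma le_of_left:
  fixes f :: "real \<Rightarrow> real"
  assumes "isCont f x" "a < x" "\<And>y. a < y \<Longrightarrow> y < x \<Longrightarrow> f y \<le> c"
  shows "f x \<le> c"
proof (rule tendsto_upperbound)
  show "(f \<longlongrightarrow> f x) (at_left x)"
    using assms(1) by (simp add: isCont_def filterlim_at_split)
  show "\<forall>\<^sub>F i in at_left x. f i \<le> c"
    using assms(2,3) by (auto simp: eventually_at_left intro!: exI[of _ a])
qed (simp add: trivial_limit_at_left_real)

lemma ge_of_left:
  fixes f :: "real \<Rightarrow> real"
  assumes "isCont f x" "a < x" "\<And>y. a < y \<Longrightarrow> y < x \<Longrightarrow> c \<le> f y"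
  shows "c \<le> f x"
proof (rule tendsto_lowerbound)
  show "(f \<longlongrightarrow> f x) (at_left x)"
    using assms(1) by (simp add: isCont_def filterlim_at_split)
  show "\<forall>\<^sub>F i in at_left x. c \<le> f i"
    using assms(2,3) by (auto simp: eventually_at_left intro!: exI[of _ a])
qed (simp add: trivial_limit_at_left_real)

lemma nbhd:
  fixes f :: "real \<Rightarrow> real"
  assumes "isCont f x" "a < f x" "f x < b"
  shows "\<exists>e>0. \<forall>y. \<bar>y - x\<bar> < e \<longrightarrow> a < f y \<and> f y < b"
proof -
  have t: "(f \<longlongrightarrow> f x) (at x)" using assms(1) by (simp add: isCont_def)
  have "eventually (\<lambda>y. a < f y \<and> f y < b) (at x)"
    using order_tendstoD(1)[OF t assms(2)] order_tendstoD(2)[OF t assms(3)] by eventually_elim auto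
  then obtain e where e: "e > 0" "\<And>y. y \<noteq> x \<Longrightarrow> dist y x < e \<Longrightarrow> a < f y \<and> f y < b"
    by (auto simp: eventually_at)
  show ?thesis
  proof (intro exI[of _ e] conjI allI impI)
    fix y assume "\<bar>y - x\<bar> < e"
    then show "a < f y" "f y < b" using e assms(2,3) by (cases "y = x"; auto simp: dist_real_def)+
  qed (use e in auto)
qed



lemma W_deriv:
  fixes m :: nat and g g' g'' :: "real \<Rightarrow> real" and y :: real
  assumes y: "y > 0"
    and d0: "(g has_real_derivative g' y) (at y)"
    and d1: "(g' has_real_derivative g'' y) (at y)"
    and ode: "g'' y + ((real m + 7) / y - y / 2) * g' y - (real m + 8) / y\<^sup>2 * g y * (g y - 1) * (g y - 2) = 0"
  shows "((\<lambda>y. exp (-(y^2/4)) * (g' y * (y^(m+7) - (2*real m+8)*y^(m+5)) - 2*(2*real m+8)*(g y - 1)*y^(m+4)))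
     has_real_derivative
          exp (-(y^2/4)) * y^(m+3) * (y^2 - (2*real m+8)) * (g y - 1) * (real m + (real m+8)*(g y - 1)^2)) (at y)"
proof -
  have e: "g'' y = - ((real m + 7) / y - y / 2) * g' y + (real m + 8) / y\<^sup>2 * g y * (g y - 1) * (g y - 2)"
    using ode by (simp add: algebra_simps)
  have p: "y^(m+7) = y^(m+3) * y^4" "y^(6+m) = y^(m+3) * y^3" "y^(m+5) = y^(m+3) * y^2"
     "y^(4+m) = y^(m+3) * y" "y^(m+4) = y^(m+3) * y" "y^(3+m) = y^(m+3)"
    by (simp_all add: power_add eval_nat_numeral mult_ac)
  show ?thesis
    apply (rule derivative_eq_intros refl d1 d0 | simp)+
    apply (simp only: p e)
    using y apply (simp add: field_simps power2_eq_square)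
    apply (simp add: algebra_simps eval_nat_numeral)
    done
qed



lemma V_deriv:
  fixes m :: nat and g g' g'' :: "real \<Rightarrow> real" and y :: real
  assumes y: "y > 0"
    and d1: "(g' has_real_derivative g'' y) (at y)"
    and ode: "g'' y + ((real m + 7) / y - y / 2) * g' y - (real m + 8) / y\<^sup>2 * g y * (g y - 1) * (g y - 2) = 0"
  shows "((\<lambda>y. y^(m+7) * exp (-(y^2/4)) * g' y) has_real_derivative
          (real m + 8) * y^(m+5) * exp (-(y^2/4)) * (g y * (g y - 1) * (g y - 2))) (at y)"
proof -
  have e: "g'' y = - ((real m + 7) / y - y / 2) * g' y + (real m + 8) / y\<^sup>2 * g y * (g y - 1) * (g y - 2)"
    using ode by (simp add: algebra_simps)
  have p7: "y^(m+7) = y^(m+5) * y^2" and p6: "y^(6+m) = y^(m+5) * y"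
    by (simp_all add: power_add eval_nat_numeral mult_ac)
  show ?thesis
    apply (rule derivative_eq_intros refl d1 | simp)+
    apply (simp only: p7 p6 e)
    using y apply (simp add: field_simps power2_eq_square)
    done
qed

lemma pos5: fixes A B C D Q :: real
  shows "A > 0 \<Longrightarrow> B > 0 \<Longrightarrow> C * D > 0 \<Longrightarrow> Q > 0 \<Longrightarrow> A * B * C * D * Q > 0"
  by (metis mult.assoc mult_pos_pos)

lemma main:
  fixes m :: nat and g g' g'' :: "real \<Rightarrow> real"
  assumes d0: "\<forall>x\<ge>0. (g has_real_derivative g' x) (at x within {0..})"
    and d1: "\<forall>x\<ge>0. (g' has_real_derivative g'' x) (at x within {0..})"
    and ode: "\<forall>y>0. g'' y + ((real m + 7) / y - y / 2) * g' y - (real m + 8) / y\<^sup>2 * g y * (g y - 1) * (g y - 2) = 0"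
    and g0: "g 0 = 0" and g'0: "g' 0 = 0" and a: "g'' 0 > 0"
    and lim: "((\<lambda>y. y^3 * g' y) \<longlongrightarrow> L) at_top"
  shows False
proof -
  have D0: "(g has_real_derivative g' y) (at y)" if "y > 0" for y
  proof -
    have "(g has_real_derivative g' y) (at y within {0..})" using d0 that by auto
    then show ?thesis using at_within_interior[of y "{0..}"] that by simp
  qed
  have D1: "(g' has_real_derivative g'' y) (at y)" if "y > 0" for y
  proof -
    have "(g' has_real_derivative g'' y) (at y within {0..})" using d1 that by auto
    then show ?thesis using at_within_interior[of y "{0..}"] that by simp
  qed
  have cg: "continuous_on {0..} g"
    by (rule DERIV_continuous_on) (use d0 in auto)
  have cg': "continuous_on {0..} g'"
    by (rule DERIV_continuous_on) (use d1 in auto)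
  have icg: "isCont g y" if "y > 0" for y using D0[OF that] by (rule DERIV_isCont)
  define V where "V = (\<lambda>y. y^(m+7) * exp (-(y^2/4)) * g' y)"
  define W where "W = (\<lambda>y. exp (-(y^2/4)) * (g' y * (y^(m+7) - (2*real m+8)*y^(m+5)) - 2*(2*real m+8)*(g y - 1)*y^(m+4)))"
  have cV: "continuous_on {0..} V" unfolding V_def by (intro continuous_intros cg') auto
  have cW: "continuous_on {0..} W" unfolding W_def by (intro continuous_intros cg cg') auto
  have V0: "V 0 = 0" by (simp add: V_def)
  have W0: "W 0 = 0" by (simp add: W_def power_add)
  have dV: "(V has_real_derivative (real m + 8) * y^(m+5) * exp (-(y^2/4)) * (g y * (g y - 1) * (g y - 2))) (at y)"
    if "y > 0" for y
    unfolding V_def using V_deriv[of y g' g'' m g, OF that D1[OF that]] ode that by auto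
  have dW: "(W has_real_derivative exp (-(y^2/4)) * y^(m+3) * (y^2 - (2*real m+8)) * (g y - 1) * (real m + (real m+8)*(g y - 1)^2)) (at y)"
    if "y > 0" for y
    unfolding W_def using W_deriv[of y g g' g'' m, OF that D0[OF that] D1[OF that]] ode that by auto
  have "\<exists>e>0. \<forall>y. 0 < y \<and> y < e \<longrightarrow> g' y > 0 \<and> g y < 1"
  proof -
    have "((\<lambda>y. (g' y - g' 0) / (y - 0)) \<longlongrightarrow> g'' 0) (at 0 within {0..})"
      using d1[rule_format, of 0] by (simp add: has_field_derivative_iff)
    then have "((\<lambda>y. g' y / y) \<longlongrightarrow> g'' 0) (at 0 within {0..})" by (simp add: g'0)
    then have t1: "((\<lambda>y. g' y / y) \<longlongrightarrow> g'' 0) (at_right 0)"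
      by (rule tendsto_within_subset) auto
    have "continuous (at 0 within {0..}) g" using d0 by (auto intro: DERIV_continuous)
    then have "(g \<longlongrightarrow> g 0) (at 0 within {0..})" by (simp add: continuous_within)
    then have "(g \<longlongrightarrow> g 0) (at_right 0)"
      by (rule tendsto_within_subset) auto
    then have t2: "(g \<longlongrightarrow> 0) (at_right 0)" by (simp add: g0)
    have "eventually (\<lambda>y. g' y / y > 0 \<and> g y < 1) (at_right 0)"
      using order_tendstoD(1)[OF t1 a] order_tendstoD(2)[OF t2 zero_less_one] by eventually_elim auto
    then obtain e where e: "e > 0" "\<And>y. 0 < y \<Longrightarrow> y < e \<Longrightarrow> g' y / y > 0 \<and> g y < 1"
      by (auto simp: eventually_at_right_field)
    show ?thesis using e by (intro exI[of _ e]) (auto simp: zero_less_divide_iff)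
  qed
  then obtain e where e: "e > 0" "\<And>y. 0 < y \<Longrightarrow> y < e \<Longrightarrow> g' y > 0 \<and> g y < 1" by blast
  have in01: "0 < g y \<and> g y < 1" if "0 < y" "y < e" for y
  proof -
    have "g 0 < g y"
    proof (rule DERIV_pos_imp_increasing_open[of 0 y g])
      fix x assume x: "0 < x" "x < y"
      show "\<exists>z. (g has_real_derivative z) (at x) \<and> z > 0" using D0[of x] e(2)[of x] x that by auto
    next
      show "continuous_on {0..y} g" using cg by (rule continuous_on_subset) auto
    qed (use that in auto)
    then show ?thesis using e that g0 by auto
  qed

  have Fpos: "g y * (g y - 1) * (g y - 2) > 0" if "0 < g y" "g y < 1" for y
  proof -
    have "g y * (g y - 1) < 0" using that by (simp add: mult_pos_neg)
    then show ?thesis using that by (simp add: mult_neg_neg)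
  qed
  have dVpos: "\<exists>z. (V has_real_derivative z) (at y) \<and> z > 0" if "y > 0" "0 < g y" "g y < 1" for y
    using dV[OF that(1)] Fpos[OF that(2,3)] that(1) by (intro exI[of _ "(real m + 8) * y^(m+5) * exp (-(y^2/4)) * (g y * (g y - 1) * (g y - 2))"]) auto
  have Vpos: "V y > 0" if "y > 0" "\<And>x. 0 < x \<Longrightarrow> x < y \<Longrightarrow> 0 < g x \<and> g x < 1" for y
  proof -
    have "V 0 < V y"
    proof (rule DERIV_pos_imp_increasing_open[of 0 y V])
      fix x assume x: "0 < x" "x < y"
      show "\<exists>z. (V has_real_derivative z) (at x) \<and> z > 0" using dVpos[of x] that(2)[OF x] x by auto
    next
      show "continuous_on {0..y} V" using cV by (rule continuous_on_subset) auto
    qed (use that in auto)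
    then show ?thesis using V0 by simp
  qed
  have g'_of_V: "g' y > 0" if "y > 0" "V y > 0" for y
  proof -
    have p: "y^(m+7) * exp (-(y^2/4)) > 0" using that(1) by simp
    show ?thesis using that(2) p unfolding V_def by (smt (verit) zero_less_mult_iff)
  qed
  define S where "S = {y. 0 < y \<and> (g y \<le> 0 \<or> 1 \<le> g y)}"
  show False
  proof (cases "S = {}")
    case True
    then have all: "0 < g x \<and> g x < 1" if "0 < x" for x
      using that by (auto simp: S_def not_le)
    have V1: "V 1 > 0" using Vpos[of 1] all by auto
    have "\<forall>y\<ge>1. V 1 * (exp (y^2/4) / y^(m+4)) \<le> y^3 * g' y"
    proof (intro allI impI)
      fix y :: real assume y: "1 \<le> y"
      have "V 1 \<le> V y"
      proof (rule DERIV_nonneg_imp_increasing_open[of 1 y V])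
        fix x assume x: "1 < x" "x < y"
        show "\<exists>z. (V has_real_derivative z) (at x) \<and> z \<ge> 0" using dVpos[of x] all[of x] x by force
      next
        show "continuous_on {1..y} V" using cV by (rule continuous_on_subset) auto
      qed (use y in auto)
      then have "V 1 \<le> y^(m+7) * exp (-(y^2/4)) * g' y" by (simp add: V_def)
      then show "V 1 * (exp (y^2/4) / y^(m+4)) \<le> y^3 * g' y"
        by (intro lower_bound_transfer) (use y in auto)
    qed
    then show False using growth_contra[OF lim V1] by blast
  next
    case False
    define y0 where "y0 = Inf S"
    have bdd: "bdd_below S" by (auto simp: S_def bdd_below_def intro!: exI[of _ 0])
    have y0e: "e \<le> y0" unfolding y0_def
    proof (rule cInf_greatest[OF False])
      fix x assume "x \<in> S"
      then show "e \<le> x" using in01[of x] by (force simp: S_def)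
    qed
    have y0pos: "y0 > 0" using e y0e by linarith
    have below: "0 < g y \<and> g y < 1" if "0 < y" "y < y0" for y
    proof -
      have "y \<notin> S" using cInf_lower[OF _ bdd, of y] that y0_def by force
      then show ?thesis using that by (auto simp: S_def)
    qed
    have g'pos: "g' y > 0" if "0 < y" "y \<le> y0" for y
      using g'_of_V[OF that(1)] Vpos[OF that(1)] below that by force
    have gy0_le: "g y0 \<le> 1"
      by (rule le_of_left[OF icg[OF y0pos], of 0]) (use below y0pos in force)+
    have gy0_pos: "g y0 > 0"
    proof -
      have "g (y0/2) < g y0"
      proof (rule DERIV_pos_imp_increasing_open[of "y0/2" y0 g])
        fix x assume x: "y0/2 < x" "x < y0"
        show "\<exists>z. (g has_real_derivative z) (at x) \<and> z > 0"
          using D0[of x] g'pos[of x] x y0pos by auto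
      next
        show "continuous_on {y0/2..y0} g" using cg y0pos by (intro continuous_on_subset[OF cg]) auto
      qed (use y0pos in auto)
      moreover have "g (y0/2) > 0" using below[of "y0/2"] y0pos by auto
      ultimately show ?thesis by simp
    qed
    have gy0: "g y0 = 1"
    proof (rule ccontr)
      assume "g y0 \<noteq> 1"
      then have lt: "g y0 < 1" using gy0_le by simp
      obtain eps where eps: "eps > 0" "\<And>y. \<bar>y - y0\<bar> < eps \<Longrightarrow> 0 < g y \<and> g y < 1"
        using nbhd[OF icg[OF y0pos] gy0_pos lt] by blast
      have "y0 + eps \<le> Inf S"
      proof (rule cInf_greatest[OF False])
        fix x assume x: "x \<in> S"
        have "y0 \<le> x" using cInf_lower[OF x bdd] y0_def by simp
        moreover have "\<not> \<bar>x - y0\<bar> < eps" using eps(2)[of x] x by (auto simp: S_def)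
        ultimately show "y0 + eps \<le> x" by linarith
      qed
      then show False using eps y0_def by simp
    qed
    have Wy0: "W y0 = exp (-(y0^2/4)) * g' y0 * (y0^(m+5) * (y0^2 - (2*real m+8)))"
    proof -
      have "y0^(m+7) = y0^(m+5) * y0^2" by (simp add: power_add eval_nat_numeral mult_ac)
      then show ?thesis by (simp add: W_def gy0 algebra_simps)
    qed
    have big: "2*real m + 8 < y0^2"
    proof (rule ccontr)
      assume "\<not> 2*real m + 8 < y0^2"
      then have le: "y0^2 \<le> 2*real m + 8" by simp
      have "W 0 < W y0"
      proof (rule DERIV_pos_imp_increasing_open[of 0 y0 W])
        fix x assume x: "0 < x" "x < y0"
        have "x^2 < y0^2" using x by (intro power_strict_mono) auto
        then have "(x^2 - (2*real m+8)) * (g x - 1) > 0" using le below[OF x] by (intro mult_neg_neg) auto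
        moreover have "real m + (real m+8)*(g x - 1)^2 > 0" using below[OF x]
          by (intro add_nonneg_pos) auto
        ultimately have "exp (-(x^2/4)) * x^(m+3) * (x^2 - (2*real m+8)) * (g x - 1) * (real m + (real m+8)*(g x - 1)^2) > 0"
          using x by (intro pos5) auto
        then show "\<exists>z. (W has_real_derivative z) (at x) \<and> z > 0" using dW[of x] x by blast
      next
        show "continuous_on {0..y0} W" using cW by (rule continuous_on_subset) auto
      qed (use y0pos in auto)
      then have "W y0 > 0" using W0 by simp
      moreover have "W y0 \<le> 0"
      proof -
        have "exp (-(y0^2/4)) * g' y0 * y0^(m+5) \<ge> 0" using g'pos[of y0] y0pos by simp
        moreover have "y0^2 - (2*real m+8) \<le> 0" using le by simp
        ultimately show ?thesis unfolding Wy0 by (metis mult.assoc mult_nonneg_nonpos)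
      qed
      ultimately show False by simp
    qed
    have W0pos: "W y0 > 0"
      unfolding Wy0 using g'pos[of y0] y0pos big by simp
    have after: "g y > 1" if y: "y > y0" for y
    proof (rule ccontr)
      assume ny: "\<not> g y > 1"
      define T where "T = {x. y0 < x \<and> g x \<le> 1}"
      have Tne: "T \<noteq> {}" using y ny by (auto simp: T_def)
      have bddT: "bdd_below T" by (auto simp: T_def bdd_below_def intro!: exI[of _ y0])
      define y1 where "y1 = Inf T"
      obtain dl where dl: "dl > 0" "\<And>h. h > 0 \<Longrightarrow> h < dl \<Longrightarrow> g y0 < g (y0 + h)"
        using DERIV_pos_inc_right[OF D0[OF y0pos] g'pos[OF y0pos order_refl]] by blast
      have y1ge: "y0 + dl \<le> y1" unfolding y1_def
      proof (rule cInf_greatest[OF Tne])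
        fix x assume x: "x \<in> T"
        show "y0 + dl \<le> x"
        proof (rule ccontr)
          assume "\<not> y0 + dl \<le> x"
          then have "g y0 < g (y0 + (x - y0))" using x by (intro dl(2)) (auto simp: T_def)
          then show False using x gy0 by (auto simp: T_def)
        qed
      qed
      have y1gt: "y1 > y0" using y1ge dl by linarith
      have y1pos: "y1 > 0" using y1gt y0pos by linarith
      have abv: "g x > 1" if "y0 < x" "x < y1" for x
      proof -
        have "x \<notin> T" using cInf_lower[OF _ bddT, of x] that y1_def by force
        then show ?thesis using that by (auto simp: T_def)
      qed
      have gy1_ge: "1 \<le> g y1"
        by (rule ge_of_left[OF icg[OF y1pos], of y0]) (use abv y1gt in force)+
      have gy1: "g y1 = 1"
      proof (rule ccontr)
        assume "g y1 \<noteq> 1"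
        then have gt: "1 < g y1" using gy1_ge by simp
        obtain eps where eps: "eps > 0" "\<And>x. \<bar>x - y1\<bar> < eps \<Longrightarrow> 1 < g x \<and> g x < g y1 + 1"
          using nbhd[OF icg[OF y1pos] gt, of "g y1 + 1"] by auto
        have "y1 + eps \<le> Inf T"
        proof (rule cInf_greatest[OF Tne])
          fix x assume x: "x \<in> T"
          have "y1 \<le> x" using cInf_lower[OF x bddT] y1_def by simp
          moreover have "\<not> \<bar>x - y1\<bar> < eps" using eps(2)[of x] x by (auto simp: T_def)
          ultimately show "y1 + eps \<le> x" by linarith
        qed
        then show False using eps y1_def by simp
      qed
      have "W y0 < W y1"
      proof (rule DERIV_pos_imp_increasing_open[of y0 y1 W])
        fix x assume x: "y0 < x" "x < y1"
        have "y0^2 < x^2" using x y0pos by (intro power_strict_mono) auto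
        then have "(x^2 - (2*real m+8)) * (g x - 1) > 0" using big abv[OF x] by (intro mult_pos_pos) auto
        moreover have "real m + (real m+8)*(g x - 1)^2 > 0" using abv[OF x]
          by (intro add_nonneg_pos) auto
        ultimately have "exp (-(x^2/4)) * x^(m+3) * (x^2 - (2*real m+8)) * (g x - 1) * (real m + (real m+8)*(g x - 1)^2) > 0"
          using x y0pos by (intro pos5) auto
        then show "\<exists>z. (W has_real_derivative z) (at x) \<and> z > 0" using dW[of x] x y0pos by force
      next
        show "continuous_on {y0..y1} W" using cW y0pos by (intro continuous_on_subset[OF cW]) auto
      qed (use y1gt in auto)
      then have W1: "W y1 > 0" using W0pos by simp
      have Wy1: "W y1 = g' y1 * (exp (-(y1^2/4)) * (y1^(m+5) * (y1^2 - (2*real m+8))))"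
      proof -
        have "y1^(m+7) = y1^(m+5) * y1^2" by (simp add: power_add eval_nat_numeral mult_ac)
        then show ?thesis by (simp add: W_def gy1 algebra_simps)
      qed
      have "y0^2 < y1^2" using y1gt y0pos by (intro power_strict_mono) auto
      then have pos1: "exp (-(y1^2/4)) * (y1^(m+5) * (y1^2 - (2*real m+8))) > 0" using big y1pos by simp
      have g'y1: "g' y1 > 0" using W1 pos1 unfolding Wy1 by (simp add: zero_less_mult_iff)
      obtain dl3 where dl3: "dl3 > 0" "\<And>h. h > 0 \<Longrightarrow> h < dl3 \<Longrightarrow> g (y1 - h) < g y1"
        using DERIV_pos_inc_left[OF D0[OF y1pos] g'y1] by blast
      define h where "h = min (dl3/2) ((y1 - y0)/2)"
      have hb: "h > 0" "h < dl3" "h < y1 - y0" using dl3(1) y1gt unfolding h_def by (auto simp: min_def)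
      have "g (y1 - h) < 1" using dl3(2)[OF hb(1,2)] gy1 by simp
      moreover have "g (y1 - h) > 1" using abv[of "y1 - h"] hb by simp
      ultimately show False by simp
    qed
    have "\<forall>y\<ge>y0+1. W y0 * (exp (y^2/4) / y^(m+4)) \<le> y^3 * g' y"
    proof (intro allI impI)
      fix y :: real assume y: "y0 + 1 \<le> y"
      have ypos: "y > 0" using y y0pos by linarith
      have "y0^2 < y^2" using y y0pos by (intro power_strict_mono) auto
      then have Apos: "y^2 - (2*real m+8) > 0" using big by simp
      have "W y0 \<le> W y"
      proof (rule DERIV_nonneg_imp_increasing_open[of y0 y W])
        fix x assume x: "y0 < x" "x < y"
        have "y0^2 < x^2" using x y0pos by (intro power_strict_mono) auto
        then have "(x^2 - (2*real m+8)) * (g x - 1) > 0" using big after[OF x(1)] by (intro mult_pos_pos) auto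
        moreover have "real m + (real m+8)*(g x - 1)^2 > 0" using after[OF x(1)]
          by (intro add_nonneg_pos) auto
        ultimately have "exp (-(x^2/4)) * x^(m+3) * (x^2 - (2*real m+8)) * (g x - 1) * (real m + (real m+8)*(g x - 1)^2) > 0"
          using x y0pos by (intro pos5) auto
        then show "\<exists>z. (W has_real_derivative z) (at x) \<and> z \<ge> 0" using dW[of x] x y0pos by force
      next
        show "continuous_on {y0..y} W" using cW y0pos by (intro continuous_on_subset[OF cW]) auto
      qed (use y in auto)
      also have "W y \<le> exp (-(y^2/4)) * (g' y * (y^(m+7) - (2*real m+8)*y^(m+5)))"
      proof -
        have "0 \<le> 2*(2*real m+8)*(g y - 1)*y^(m+4)" using after[of y] y y0pos ypos by simp
        then have "exp (-(y^2/4)) * (g' y * (y^(m+7) - (2*real m+8)*y^(m+5)) - 2*(2*real m+8)*(g y - 1)*y^(m+4))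
             \<le> exp (-(y^2/4)) * (g' y * (y^(m+7) - (2*real m+8)*y^(m+5)))"
          by (intro mult_left_mono) auto
        then show ?thesis unfolding W_def by simp
      qed
      finally have w1: "W y0 \<le> exp (-(y^2/4)) * (g' y * (y^(m+7) - (2*real m+8)*y^(m+5)))" .
      have Aeq: "y^(m+7) - (2*real m+8)*y^(m+5) = y^(m+5) * (y^2 - (2*real m+8))"
        by (simp add: power_add eval_nat_numeral algebra_simps)
      have A0: "y^(m+7) - (2*real m+8)*y^(m+5) > 0" unfolding Aeq using Apos ypos by simp
      have Ale: "y^(m+7) - (2*real m+8)*y^(m+5) \<le> y^(m+7)" using ypos by simp
      have g'y: "g' y > 0"
      proof -
        have "0 < exp (-(y^2/4)) * (g' y * (y^(m+7) - (2*real m+8)*y^(m+5)))" using w1 W0pos by linarith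
        then have "0 < g' y * (y^(m+7) - (2*real m+8)*y^(m+5))" by (simp add: zero_less_mult_iff)
        then show ?thesis using A0 by (smt (verit) zero_less_mult_iff)
      qed
      have "exp (-(y^2/4)) * (g' y * (y^(m+7) - (2*real m+8)*y^(m+5))) \<le> exp (-(y^2/4)) * (g' y * y^(m+7))"
        using Ale g'y by (intro mult_left_mono) auto
      with w1 have "W y0 \<le> y^(m+7) * exp (-(y^2/4)) * g' y" by (simp add: mult_ac)
      then show "W y0 * (exp (y^2/4) / y^(m+4)) \<le> y^3 * g' y"
        by (intro lower_bound_transfer) (use ypos in auto)
    qed
    then show False using growth_contra[OF lim W0pos] by blast
  qed
qed


theorem theorem2:
  fixes d :: nat
  assumes "d \<ge> 10"
  shows "\<not> (\<exists>(g :: real \<Rightarrow> real) Dg.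
     smooth_derivs_on_nonneg g Dg \<and>
     (\<forall>y>0. Dg 2 y + ((real d - 3) / y - y / 2) * Dg 1 y
              - (real d - 2) / y\<^sup>2 * g y * (g y - 1) * (g y - 2) = 0) \<and>
     g 0 = 0 \<and> Dg 1 0 = 0 \<and> (\<exists>a>0. Dg 2 0 = a) \<and>
     (\<exists>b::real. (g \<longlongrightarrow> b) at_top \<and>
        ((\<lambda>y. y ^ 3 * Dg 1 y) \<longlongrightarrow> - 2 * (real d - 2) * b * (b - 1) * (b - 2)) at_top))"
proof
  assume "\<exists>(g :: real \<Rightarrow> real) Dg.
     smooth_derivs_on_nonneg g Dg \<and>
     (\<forall>y>0. Dg 2 y + ((real d - 3) / y - y / 2) * Dg 1 y
              - (real d - 2) / y\<^sup>2 * g y * (g y - 1) * (g y - 2) = 0) \<and>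
     g 0 = 0 \<and> Dg 1 0 = 0 \<and> (\<exists>a>0. Dg 2 0 = a) \<and>
     (\<exists>b::real. (g \<longlongrightarrow> b) at_top \<and>
        ((\<lambda>y. y ^ 3 * Dg 1 y) \<longlongrightarrow> - 2 * (real d - 2) * b * (b - 1) * (b - 2)) at_top)"
  then obtain g :: "real \<Rightarrow> real" and Dg a b where
    sm: "smooth_derivs_on_nonneg g Dg" and
    ode: "\<forall>y>0. Dg 2 y + ((real d - 3) / y - y / 2) * Dg 1 y
              - (real d - 2) / y\<^sup>2 * g y * (g y - 1) * (g y - 2) = 0" and
    g0: "g 0 = 0" and g10: "Dg 1 0 = 0" and a: "a > 0" "Dg 2 0 = a" and
    lim: "((\<lambda>y. y ^ 3 * Dg 1 y) \<longlongrightarrow> - 2 * (real d - 2) * b * (b - 1) * (b - 2)) at_top"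
    by blast
  obtain m where dm: "d = m + 10" using assms by (metis add.commute le_iff_add)
  have Dg0: "Dg 0 = g" and der: "\<And>n x. x \<ge> 0 \<Longrightarrow> (Dg n has_real_derivative Dg (Suc n) x) (at x within {0..})"
    using sm by (auto simp: smooth_derivs_on_nonneg_def)
  have d0: "\<forall>x\<ge>0. (g has_real_derivative Dg 1 x) (at x within {0..})"
    using der[of _ 0] Dg0 by simp
  have d1: "\<forall>x\<ge>0. (Dg 1 has_real_derivative Dg 2 x) (at x within {0..})"
    using der[of _ 1] by (simp add: numeral_2_eq_2)
  have ode': "\<forall>y>0. Dg 2 y + ((real m + 7) / y - y / 2) * Dg 1 y - (real m + 8) / y\<^sup>2 * g y * (g y - 1) * (g y - 2) = 0"
  proof (intro allI impI)
    fix y :: real assume "y > 0"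
    then have "Dg 2 y + ((real d - 3) / y - y / 2) * Dg 1 y
              - (real d - 2) / y\<^sup>2 * g y * (g y - 1) * (g y - 2) = 0" using ode by blast
    moreover have "real d - 3 = real m + 7" "real d - 2 = real m + 8" using dm by simp_all
    ultimately show "Dg 2 y + ((real m + 7) / y - y / 2) * Dg 1 y - (real m + 8) / y\<^sup>2 * g y * (g y - 1) * (g y - 2) = 0"
      by simp
  qed
  show False
    by (rule main[OF d0 d1 ode' g0 g10 _ lim]) (use a in simp)
qed

end
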